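(* Let $\psi^\beta$ be a smooth surface tensor field with one contravariant surface index on the dynamic surface $\Sigma_t$. Then $$\left(\dot\nabla\nabla_\alpha-\nabla_\alpha\dot\nabla\right)\psi^\beta=\dot R^\beta_{\ \alpha\gamma}\,\psi^\gamma+C\,B^\gamma_\alpha\,\nabla_\gamma\psi^\beta ,$$ where the temporal curvature tensor is $$\dot R^\beta_{\ \alpha\gamma}=\partial_t\Gamma^\beta_{\alpha\gamma}+R^\beta_{\ \gamma\alpha\delta}V^\delta-\nabla_\alpha\dot\Gamma^\beta_\gamma .$$
   Context: Setting: $\Sigma_t$ is a smooth one-parameter family of 2-dimensional surfaces in Euclidean 3-space, given by a position vector $\mathbf R(S^1,S^2,t)$ in surface coordinates $S^\alpha$ (Greek indices run over $1,2$; repeated indices are summed). Put $\mathbf S_\alpha=\partial_\alpha\mathbf R$, $S_{\alpha\beta}=\mathbf S_\alpha\cdot\mathbf S_\beta$, $S^{\alpha\beta}$ the inverse metric (used to raise and lower surface indices), $\mathbf S^\alpha=S^{\alpha\beta}\mathbf S_\beta$, $\mathbf N$ the unit normal, $\Gamma^\gamma_{\alpha\beta}=\mathbf S^\gamma\cdot\partial_\alpha\mathbf S_\beta$ the surface Christoffel symbols, and $\nabla_\alpha$ the surface covariant derivative. The curvature tensor is $B_{\alpha\beta}=\mathbf N\cdot\nabla_\alpha\mathbf S_\beta$, so that $\nabla_\alpha\mathbf S_\beta=\mathbf N B_{\alpha\beta}$ and $B^\alpha_\beta=-\mathbf S^\alpha\cdot\nabla_\beta\mathbf N$. The Riemann tensor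 is defined by $(\nabla_\alpha\nabla_\beta-\nabla_\beta\nabla_\alpha)\psi^\gamma=R^\gamma_{\ \delta\alpha\beta}\psi^\delta$. Velocity: $\mathbf V=\partial_t\mathbf R$ (at fixed $S^\alpha$), normal velocity $C=\mathbf V\cdot\mathbf N$, tangential components $V^\alpha=\mathbf V\cdot\mathbf S^\alpha$, so $\mathbf V=C\mathbf N+V^\alpha\mathbf S_\alpha$. The Christoffel time symbol is $\dot\Gamma^\alpha_\beta=\nabla_\beta V^\alpha-C B^\alpha_\beta$. The invariant (tensorial) time derivative $\dot\nabla$ is defined on scalars by $\dot\nabla\psi=\partial_t\psi-V^\alpha\nabla_\alpha\psi$, on surface tensors by $\dot\nabla\psi^\alpha=\partial_t\psi^\alpha-V^\gamma\nabla_\gamma\psi^\alpha+\dot\Gamma^\alpha_\gamma\psi^\gamma$, $\dot\nabla\psi_\alpha=\partial_t\psi_\alpha-V^\gamma\nabla_\gamma\psi_\alpha-\dot\Gamma^\gamma_\alpha\psi_\gamma$ (one such term per index for higher rank), and on vector-valued fields in Euclidean space componentwise in Cartesian coordinates in the same way (e.g. $\dot\nabla\mathbf S_\alpha=\partial_t\mathbf S_\alpha-V^\gamma\nabla_\gamma\mathbf S_\alpha-\dot\Gamma^\gamma_\alpha\mathbf S_\gamma$). In the formula for $\dot R$, $\nabla_\alpha\dot\Gamma^\beta_\gamma$ is computed with the covariant derivative rule for an object with one upper and one lower surface index. *)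

theory Defs
  imports "HOL-Analysis.Analysis"
begin

text \<open>
  Surface coordinates are points x :: real^2 (index type 2, the two
  elements of which play the role of the Greek indices 1,2), time is t :: real. The ambient Euclidean space is real^3.
  Tensor components are indexed families: a contravariant surface vector is
  psi :: 2 => real^2 => real => real (psi beta = psi^beta); a mixed tensor T with one
  upper and one lower index is T :: 2 => 2 => ..., with T beta alpha = T^beta_alpha.
\<close>

type_synonym 'a field = "real^2 \<Rightarrow> real \<Rightarrow> 'a"

definition pS :: "2 \<Rightarrow> 'a::real_normed_vector field \<Rightarrow> 'a field" where
  "pS \<alpha> f x t = vector_derivative (\<lambda>h. f (x + h *\<^sub>R axis \<alpha> 1) t) (at 0)"

definition pT :: "'a::real_normed_vector field \<Rightarrow> 'a field" where
  "pT f x t = vector_derivative (\<lambda>s. f x s) (at t)"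

fun iterpd :: "2 option list \<Rightarrow> 'a::real_normed_vector field \<Rightarrow> 'a field" where
  "iterpd [] f = f"
| "iterpd (d # ds) f = (case d of None \<Rightarrow> pT (iterpd ds f) | Some \<alpha> \<Rightarrow> pS \<alpha> (iterpd ds f))"

definition smooth_field_on :: "((real^2) \<times> real) set \<Rightarrow> 'a::real_normed_vector field \<Rightarrow> bool" where
  "smooth_field_on U f \<longleftrightarrow>
     (\<forall>ds. \<forall>p\<in>U. (\<lambda>q. iterpd ds f (fst q) (snd q)) differentiable (at p))"

definition Sv :: "(real^3) field \<Rightarrow> 2 \<Rightarrow> (real^3) field" where
  "Sv R \<alpha> = pS \<alpha> R"

definition metric :: "(real^3) field \<Rightarrow> 2 \<Rightarrow> 2 \<Rightarrow> real field" where
  "metric R \<alpha> \<beta> x t = Sv R \<alpha> x t \<bullet> Sv R \<beta> x t"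

definition invmetric :: "(real^3) field \<Rightarrow> 2 \<Rightarrow> 2 \<Rightarrow> real field" where
  "invmetric R \<alpha> \<beta> x t = matrix_inv (\<chi> i j. metric R i j x t) $ \<alpha> $ \<beta>"

definition Sup :: "(real^3) field \<Rightarrow> 2 \<Rightarrow> (real^3) field" where
  "Sup R \<alpha> x t = (\<Sum>\<beta>\<in>UNIV. invmetric R \<alpha> \<beta> x t *\<^sub>R Sv R \<beta> x t)"

definition normal :: "(real^3) field \<Rightarrow> (real^3) field" where
  "normal R x t = (1 / norm (cross3 (Sv R 1 x t) (Sv R 2 x t))) *\<^sub>R cross3 (Sv R 1 x t) (Sv R 2 x t)"

text \<open>Christoffel symbols: chr R gamma alpha beta = Gamma^gamma_{alpha beta}.\<close>
definition chr :: "(real^3) field \<Rightarrow> 2 \<Rightarrow> 2 \<Rightarrow> 2 \<Rightarrow> real field" where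
  "chr R \<gamma> \<alpha> \<beta> x t = Sup R \<gamma> x t \<bullet> pS \<alpha> (Sv R \<beta>) x t"

text \<open>Covariant derivative of a contravariant vector: covV R psi alpha beta = nabla_alpha psi^beta.\<close>
definition covV :: "(real^3) field \<Rightarrow> (2 \<Rightarrow> real field) \<Rightarrow> 2 \<Rightarrow> 2 \<Rightarrow> real field" where
  "covV R \<psi> \<alpha> \<beta> x t = pS \<alpha> (\<psi> \<beta>) x t + (\<Sum>\<gamma>\<in>UNIV. chr R \<beta> \<alpha> \<gamma> x t * \<psi> \<gamma> x t)"

text \<open>Covariant derivative of a mixed tensor: covM R T gamma beta alpha = nabla_gamma T^beta_alpha.\<close>
definition covM :: "(real^3) field \<Rightarrow> (2 \<Rightarrow> 2 \<Rightarrow> real field) \<Rightarrow> 2 \<Rightarrow> 2 \<Rightarrow> 2 \<Rightarrow> real field" where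
  "covM R T \<gamma> \<beta> \<alpha> x t = pS \<gamma> (T \<beta> \<alpha>) x t
     + (\<Sum>\<delta>\<in>UNIV. chr R \<beta> \<gamma> \<delta> x t * T \<delta> \<alpha> x t)
     - (\<Sum>\<delta>\<in>UNIV. chr R \<delta> \<gamma> \<alpha> x t * T \<beta> \<delta> x t)"

text \<open>Curvature tensor B_{alpha beta} = N . nabla_alpha S_beta, with
  nabla_alpha S_beta = d_alpha S_beta - Gamma^gamma_{alpha beta} S_gamma.\<close>
definition Blow :: "(real^3) field \<Rightarrow> 2 \<Rightarrow> 2 \<Rightarrow> real field" where
  "Blow R \<alpha> \<beta> x t = normal R x t \<bullet>
     (pS \<alpha> (Sv R \<beta>) x t - (\<Sum>\<gamma>\<in>UNIV. chr R \<gamma> \<alpha> \<beta> x t *\<^sub>R Sv R \<gamma> x t))"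

text \<open>Bmix R alpha beta = B^alpha_beta (first index raised).\<close>
definition Bmix :: "(real^3) field \<Rightarrow> 2 \<Rightarrow> 2 \<Rightarrow> real field" where
  "Bmix R \<alpha> \<beta> x t = (\<Sum>\<gamma>\<in>UNIV. invmetric R \<alpha> \<gamma> x t * Blow R \<gamma> \<beta> x t)"

text \<open>Riemann tensor R^gamma_{delta alpha beta}, the tensor with
  (nabla_alpha nabla_beta - nabla_beta nabla_alpha) psi^gamma = R^gamma_{delta alpha beta} psi^delta,
  written out in terms of the Christoffel symbols.\<close>
definition Riem :: "(real^3) field \<Rightarrow> 2 \<Rightarrow> 2 \<Rightarrow> 2 \<Rightarrow> 2 \<Rightarrow> real field" where
  "Riem R \<gamma> \<delta> \<alpha> \<beta> x t =
     pS \<alpha> (chr R \<gamma> \<beta> \<delta>) x t - pS \<beta> (chr R \<gamma> \<alpha> \<delta>) x t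
     + (\<Sum>\<epsilon>\<in>UNIV. chr R \<gamma> \<alpha> \<epsilon> x t * chr R \<epsilon> \<beta> \<delta> x t
                     - chr R \<gamma> \<beta> \<epsilon> x t * chr R \<epsilon> \<alpha> \<delta> x t)"

definition vel :: "(real^3) field \<Rightarrow> (real^3) field" where
  "vel R = pT R"

definition Cn :: "(real^3) field \<Rightarrow> real field" where
  "Cn R x t = vel R x t \<bullet> normal R x t"

definition Vt :: "(real^3) field \<Rightarrow> 2 \<Rightarrow> real field" where
  "Vt R \<alpha> x t = vel R x t \<bullet> Sup R \<alpha> x t"

text \<open>Christoffel time symbol: Gdot R alpha beta = dot Gamma^alpha_beta = nabla_beta V^alpha - C B^alpha_beta.\<close>
definition Gdot :: "(real^3) field \<Rightarrow> 2 \<Rightarrow> 2 \<Rightarrow> real field" where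
  "Gdot R \<alpha> \<beta> x t = covV R (Vt R) \<beta> \<alpha> x t - Cn R x t * Bmix R \<alpha> \<beta> x t"

definition tdV :: "(real^3) field \<Rightarrow> (2 \<Rightarrow> real field) \<Rightarrow> 2 \<Rightarrow> real field" where
  "tdV R \<psi> \<alpha> x t = pT (\<psi> \<alpha>) x t
     - (\<Sum>\<gamma>\<in>UNIV. Vt R \<gamma> x t * covV R \<psi> \<gamma> \<alpha> x t)
     + (\<Sum>\<gamma>\<in>UNIV. Gdot R \<alpha> \<gamma> x t * \<psi> \<gamma> x t)"

definition tdM :: "(real^3) field \<Rightarrow> (2 \<Rightarrow> 2 \<Rightarrow> real field) \<Rightarrow> 2 \<Rightarrow> 2 \<Rightarrow> real field" where
  "tdM R T \<beta> \<alpha> x t = pT (T \<beta> \<alpha>) x t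
     - (\<Sum>\<gamma>\<in>UNIV. Vt R \<gamma> x t * covM R T \<gamma> \<beta> \<alpha> x t)
     + (\<Sum>\<gamma>\<in>UNIV. Gdot R \<beta> \<gamma> x t * T \<gamma> \<alpha> x t)
     - (\<Sum>\<gamma>\<in>UNIV. Gdot R \<gamma> \<alpha> x t * T \<beta> \<gamma> x t)"

text \<open>Temporal curvature tensor Rdot R beta alpha gamma = dot R^beta_{alpha gamma}
  = d_t Gamma^beta_{alpha gamma} + R^beta_{gamma alpha delta} V^delta - nabla_alpha dot Gamma^beta_gamma.\<close>
definition Rdot :: "(real^3) field \<Rightarrow> 2 \<Rightarrow> 2 \<Rightarrow> 2 \<Rightarrow> real field" where
  "Rdot R \<beta> \<alpha> \<gamma> x t = pT (chr R \<beta> \<alpha> \<gamma>) x t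
     + (\<Sum>\<delta>\<in>UNIV. Riem R \<beta> \<gamma> \<alpha> \<delta> x t * Vt R \<delta> x t)
     - covM R (Gdot R) \<alpha> \<beta> \<gamma> x t"

end

theory Submission
  imports Defs
begin


definition Fq :: "'a field \<Rightarrow> ((real^2) \<times> real) \<Rightarrow> 'a" where
  "Fq f = (\<lambda>q. f (fst q) (snd q))"

fun dv :: "2 option \<Rightarrow> (real^2) \<times> real" where
  "dv None = (0, 1)"
| "dv (Some a) = (axis a 1, 0)"

lemma pd_vd:
  fixes f :: "'a::real_normed_vector field"
  assumes "Fq f differentiable (at (x,t))"
  shows "iterpd [d] f x t = frechet_derivative (Fq f) (at (x,t)) (dv d)"
proof -
  let ?F' = "frechet_derivative (Fq f) (at (x,t))"
  have FD: "(Fq f has_derivative ?F') (at (x,t))" using assms frechet_derivative_works by blast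
  have lin: "linear ?F'" using FD has_derivative_linear by blast
  show ?thesis
  proof (cases d)
    case None
    let ?c = "\<lambda>s::real. (x, s)"
    have c: "(?c has_derivative (\<lambda>h. h *\<^sub>R (0::real^2, 1::real))) (at t)"
      by (auto intro!: derivative_eq_intros simp: algebra_simps)
    have "((Fq f \<circ> ?c) has_derivative (?F' \<circ> (\<lambda>h. h *\<^sub>R (0::real^2, 1::real)))) (at t)"
      by (rule diff_chain_at[OF c]) (simp add: FD)
    moreover have "(?F' \<circ> (\<lambda>h. h *\<^sub>R (0::real^2, 1::real))) = (\<lambda>h. h *\<^sub>R ?F' (0,1))"
    proof
      fix h :: real
      have "?F' (h *\<^sub>R (0::real^2, 1::real)) = h *\<^sub>R ?F' (0,1)" by (rule linear_scale[OF lin])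
      then show "(?F' \<circ> (\<lambda>h. h *\<^sub>R (0::real^2, 1::real))) h = h *\<^sub>R ?F' (0,1)" by (simp only: o_def)
    qed
    ultimately have "((\<lambda>s. f x s) has_vector_derivative ?F' (0,1)) (at t)"
      by (simp add: has_vector_derivative_def Fq_def o_def)
    then show ?thesis using None by (simp add: pT_def vector_derivative_at)
  next
    case (Some a)
    let ?v = "(axis a 1 :: real^2, 0::real)"
    let ?c = "\<lambda>h::real. (x + h *\<^sub>R axis a 1, t)"
    have c: "(?c has_derivative (\<lambda>h. h *\<^sub>R ?v)) (at 0)"
      by (auto intro!: derivative_eq_intros simp: algebra_simps)
    have "((Fq f \<circ> ?c) has_derivative (?F' \<circ> (\<lambda>h. h *\<^sub>R ?v))) (at 0)"
      by (rule diff_chain_at[OF c]) (simp add: FD)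
    moreover have "(?F' \<circ> (\<lambda>h. h *\<^sub>R ?v)) = (\<lambda>h. h *\<^sub>R ?F' ?v)"
    proof
      fix h :: real
      have "?F' (h *\<^sub>R ?v) = h *\<^sub>R ?F' ?v" by (rule linear_scale[OF lin])
      then show "(?F' \<circ> (\<lambda>h. h *\<^sub>R ?v)) h = h *\<^sub>R ?F' ?v" by (simp only: o_def)
    qed
    ultimately have "((\<lambda>h. f (x + h *\<^sub>R axis a 1) t) has_vector_derivative ?F' ?v) (at 0)"
      by (simp add: has_vector_derivative_def Fq_def o_def)
    then show ?thesis using Some by (simp add: pS_def vector_derivative_at)
  qed
qed

lemma ev_in_open:
  fixes c :: "real \<Rightarrow> 'b::topological_space"
  assumes "continuous_on UNIV c" "open U" "c s0 \<in> U"
  shows "eventually (\<lambda>h. c h \<in> U) (nhds s0)"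
proof -
  have "open (c -` U)" using open_vimage assms by blast
  then show ?thesis unfolding eventually_nhds using assms(3) by blast
qed

lemma pd_local:
  fixes f g :: "'a::real_normed_vector field"
  assumes "open U" "(x,t) \<in> U" "\<And>q. q \<in> U \<Longrightarrow> Fq f q = Fq g q"
  shows "iterpd [d] f x t = iterpd [d] g x t"
proof (cases d)
  case None
  have "eventually (\<lambda>s. (x, s) \<in> U) (nhds t)"
    by (rule ev_in_open) (auto intro!: continuous_intros simp: assms)
  then have "eventually (\<lambda>s. s \<in> UNIV \<longrightarrow> f x s = g x s) (nhds t)"
    by eventually_elim (use assms(3) in \<open>auto simp: Fq_def\<close>)
  then have "vector_derivative (\<lambda>s. f x s) (at t) = vector_derivative (\<lambda>s. g x s) (at t)"
    by (intro vector_derivative_cong_eq) auto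
  then show ?thesis using None by (simp add: pT_def)
next
  case (Some a)
  have "eventually (\<lambda>h. (x + h *\<^sub>R axis a 1, t) \<in> U) (nhds 0)"
    by (rule ev_in_open) (auto intro!: continuous_intros simp: assms)
  then have "eventually (\<lambda>h. h \<in> UNIV \<longrightarrow> f (x + h *\<^sub>R axis a 1) t = g (x + h *\<^sub>R axis a 1) t) (nhds 0)"
    by eventually_elim (use assms(3) in \<open>auto simp: Fq_def\<close>)
  then have "vector_derivative (\<lambda>h. f (x + h *\<^sub>R axis a 1) t) (at 0) = vector_derivative (\<lambda>h. g (x + h *\<^sub>R axis a 1) t) (at 0)"
    by (intro vector_derivative_cong_eq) auto
  then show ?thesis using Some by (simp add: pS_def)
qed

lemma iterpd_append: "iterpd (xs @ ys) f = iterpd xs (iterpd ys f)"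
  by (induction xs) (auto split: option.split)

definition sm :: "nat \<Rightarrow> ((real^2) \<times> real) set \<Rightarrow> 'a::real_normed_vector field \<Rightarrow> bool" where
  "sm n U f \<longleftrightarrow> (\<forall>ds. length ds \<le> n \<longrightarrow> (\<forall>p\<in>U. Fq (iterpd ds f) differentiable (at p)))"

lemma smooth_sm: "smooth_field_on U f \<longleftrightarrow> (\<forall>n. sm n U f)"
  unfolding smooth_field_on_def sm_def Fq_def by auto

lemma sm_0: "sm 0 U f \<longleftrightarrow> (\<forall>p\<in>U. Fq f differentiable (at p))"
  unfolding sm_def by auto

lemma sm_Suc: "sm (Suc n) U f \<longleftrightarrow> sm 0 U f \<and> (\<forall>d. sm n U (iterpd [d] f))"
proof
  assume A: "sm (Suc n) U f"
  show "sm 0 U f \<and> (\<forall>d. sm n U (iterpd [d] f))"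
  proof (intro conjI allI)
    show "sm 0 U f" unfolding sm_0 using A unfolding sm_def by (metis iterpd.simps(1) le0 list.size(3))
    fix d show "sm n U (iterpd [d] f)" unfolding sm_def
    proof (intro allI impI)
      fix ds :: "2 option list" assume "length ds \<le> n"
      then show "\<forall>p\<in>U. Fq (iterpd ds (iterpd [d] f)) differentiable at p"
        using A unfolding sm_def iterpd_append[symmetric] by (metis Suc_le_mono length_append_singleton)
    qed
  qed
next
  assume A: "sm 0 U f \<and> (\<forall>d. sm n U (iterpd [d] f))"
  show "sm (Suc n) U f" unfolding sm_def
  proof (intro allI impI)
    fix ds :: "2 option list" assume L: "length ds \<le> Suc n"
    show "\<forall>p\<in>U. Fq (iterpd ds f) differentiable at p"
    proof (cases ds rule: rev_cases)
      case Nil then show ?thesis using A unfolding sm_0 by simp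
    next
      case (snoc ys d)
      then show ?thesis using A L unfolding sm_def by (simp add: iterpd_append)
    qed
  qed
qed

lemma sm_mono: "sm (Suc n) U f \<Longrightarrow> sm n U f"
  unfolding sm_def by auto

lemma diff_local:
  assumes "open U" "p \<in> U" "F differentiable (at p)" "\<And>q. q \<in> U \<Longrightarrow> F q = G q"
  shows "G differentiable (at p)"
proof -
  obtain D where "(F has_derivative D) (at p)" using assms(3) unfolding differentiable_def by blast
  then have "(G has_derivative D) (at p)"
    by (rule has_derivative_transform_within_open[OF _ assms(1,2)]) (use assms(4) in auto)
  then show ?thesis unfolding differentiable_def by blast
qed

lemma sm_cong:
  assumes "open U" "sm n U f" "\<And>q. q \<in> U \<Longrightarrow> Fq f q = Fq g q"
  shows "sm n U g"
  using assms(2,3)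
proof (induction n arbitrary: f g)
  case 0
  then show ?case unfolding sm_0
    using assms(1) diff_local by blast
next
  case (Suc n)
  have "sm 0 U f" using Suc.prems(1) sm_Suc by blast
  then have "sm 0 U g" using Suc.prems(2) assms(1) diff_local unfolding sm_0 by blast
  moreover have "sm n U (iterpd [d] g)" for d
  proof (rule Suc.IH)
    show "sm n U (iterpd [d] f)" using Suc.prems(1) sm_Suc by blast
    fix q assume "q \<in> U"
    then show "Fq (iterpd [d] f) q = Fq (iterpd [d] g) q"
      using pd_local[OF assms(1), of "fst q" "snd q" f g d] Suc.prems(2) by (simp add: Fq_def)
  qed
  ultimately show ?case using sm_Suc by blast
qed

lemma pd_hd:
  fixes f :: "'a::real_normed_vector field"
  assumes "(Fq f has_derivative D) (at (x,t))"
  shows "iterpd [d] f x t = D (dv d)"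
proof -
  have "Fq f differentiable (at (x,t))" using assms differentiable_def by blast
  then show ?thesis using pd_vd frechet_derivative_at[OF assms] by metis
qed

lemma Fq_diff_D: "Fq f differentiable (at p) \<Longrightarrow> (Fq f has_derivative frechet_derivative (Fq f) (at p)) (at p)"
  using frechet_derivative_works by blast

lemma pd_add:
  fixes f g :: "'a::real_normed_vector field"
  assumes "Fq f differentiable (at (x,t))" "Fq g differentiable (at (x,t))"
  shows "iterpd [d] (\<lambda>x t. f x t + g x t) x t = iterpd [d] f x t + iterpd [d] g x t"
    and "Fq (\<lambda>x t. f x t + g x t) differentiable (at (x,t))"
proof -
  let ?F = "frechet_derivative (Fq f) (at (x,t))" and ?G = "frechet_derivative (Fq g) (at (x,t))"
  have D: "(Fq (\<lambda>x t. f x t + g x t) has_derivative (\<lambda>h. ?F h + ?G h)) (at (x,t))"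
    using has_derivative_add[OF Fq_diff_D[OF assms(1)] Fq_diff_D[OF assms(2)]] by (simp add: Fq_def)
  show "iterpd [d] (\<lambda>x t. f x t + g x t) x t = iterpd [d] f x t + iterpd [d] g x t"
    using pd_hd[OF D] pd_vd[OF assms(1)] pd_vd[OF assms(2)] by simp
  show "Fq (\<lambda>x t. f x t + g x t) differentiable (at (x,t))" using D differentiable_def by blast
qed

lemma pd_diff:
  fixes f g :: "'a::real_normed_vector field"
  assumes "Fq f differentiable (at (x,t))" "Fq g differentiable (at (x,t))"
  shows "iterpd [d] (\<lambda>x t. f x t - g x t) x t = iterpd [d] f x t - iterpd [d] g x t"
    and "Fq (\<lambda>x t. f x t - g x t) differentiable (at (x,t))"
proof -
  let ?F = "frechet_derivative (Fq f) (at (x,t))" and ?G = "frechet_derivative (Fq g) (at (x,t))"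
  have D: "(Fq (\<lambda>x t. f x t - g x t) has_derivative (\<lambda>h. ?F h - ?G h)) (at (x,t))"
    using has_derivative_diff[OF Fq_diff_D[OF assms(1)] Fq_diff_D[OF assms(2)]] by (simp add: Fq_def)
  show "iterpd [d] (\<lambda>x t. f x t - g x t) x t = iterpd [d] f x t - iterpd [d] g x t"
    using pd_hd[OF D] pd_vd[OF assms(1)] pd_vd[OF assms(2)] by simp
  show "Fq (\<lambda>x t. f x t - g x t) differentiable (at (x,t))" using D differentiable_def by blast
qed

lemma pd_bil:
  fixes f :: "'a::real_normed_vector field" and g :: "'b::real_normed_vector field"
    and prod :: "'a \<Rightarrow> 'b \<Rightarrow> 'c::real_normed_vector"
  assumes bb: "bounded_bilinear prod"
    and "Fq f differentiable (at (x,t))" "Fq g differentiable (at (x,t))"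
  shows "iterpd [d] (\<lambda>x t. prod (f x t) (g x t)) x t = prod (f x t) (iterpd [d] g x t) + prod (iterpd [d] f x t) (g x t)"
    and "Fq (\<lambda>x t. prod (f x t) (g x t)) differentiable (at (x,t))"
proof -
  let ?F = "frechet_derivative (Fq f) (at (x,t))" and ?G = "frechet_derivative (Fq g) (at (x,t))"
  have D: "(Fq (\<lambda>x t. prod (f x t) (g x t)) has_derivative (\<lambda>h. prod (f x t) (?G h) + prod (?F h) (g x t))) (at (x,t))"
    using bounded_bilinear.FDERIV[OF bb Fq_diff_D[OF assms(2)] Fq_diff_D[OF assms(3)]] by (simp add: Fq_def)
  show "iterpd [d] (\<lambda>x t. prod (f x t) (g x t)) x t = prod (f x t) (iterpd [d] g x t) + prod (iterpd [d] f x t) (g x t)"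
    using pd_hd[OF D] pd_vd[OF assms(2)] pd_vd[OF assms(3)] by simp
  show "Fq (\<lambda>x t. prod (f x t) (g x t)) differentiable (at (x,t))" using D differentiable_def by blast
qed

lemma pd_const:
  shows "iterpd [d] (\<lambda>x t. c) x t = 0"
    and "Fq (\<lambda>x t. c) differentiable (at (x,t))"
proof -
  have D: "(Fq (\<lambda>x t. c) has_derivative (\<lambda>h. 0)) (at (x,t))" by (simp add: Fq_def)
  show "iterpd [d] (\<lambda>x t. c) x t = 0" using pd_hd[OF D] by simp
  show "Fq (\<lambda>x t. c) differentiable (at (x,t))" using D differentiable_def by blast
qed

lemma pd_inv:
  fixes f :: "real field"
  assumes "Fq f differentiable (at (x,t))" "f x t \<noteq> 0"
  shows "iterpd [d] (\<lambda>x t. inverse (f x t)) x t = ((-1::real) * (inverse (f x t) * inverse (f x t))) * iterpd [d] f x t"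
    and "Fq (\<lambda>x t. inverse (f x t)) differentiable (at (x,t))"
proof -
  let ?F = "frechet_derivative (Fq f) (at (x,t))"
  have H: "((\<lambda>q. inverse (Fq f q)) has_derivative (\<lambda>h. - (inverse (Fq f (x,t)) * ?F h * inverse (Fq f (x,t))))) (at (x,t))"
    by (rule Deriv.has_derivative_inverse) (use assms Fq_diff_D[OF assms(1)] in \<open>simp_all add: Fq_def\<close>)
  have E: "Fq (\<lambda>x t. inverse (f x t)) = (\<lambda>q. inverse (Fq f q))" by (simp add: Fq_def)
  have D: "(Fq (\<lambda>x t. inverse (f x t)) has_derivative (\<lambda>h. - (inverse (Fq f (x,t)) * ?F h * inverse (Fq f (x,t))))) (at (x,t))"
    using H E by simp
  have "iterpd [d] (\<lambda>x t. inverse (f x t)) x t = - (inverse (Fq f (x,t)) * ?F (dv d) * inverse (Fq f (x,t)))"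
    by (rule pd_hd[OF D])
  also have "\<dots> = ((-1::real) * (inverse (f x t) * inverse (f x t))) * iterpd [d] f x t"
    using pd_vd[OF assms(1)] by (simp add: Fq_def)
  finally show "iterpd [d] (\<lambda>x t. inverse (f x t)) x t = ((-1::real) * (inverse (f x t) * inverse (f x t))) * iterpd [d] f x t" .
  show "Fq (\<lambda>x t. inverse (f x t)) differentiable (at (x,t))" using D differentiable_def by blast
qed

lemma pd_sqrt:
  fixes f :: "real field"
  assumes "Fq f differentiable (at (x,t))" "f x t > 0"
  shows "iterpd [d] (\<lambda>x t. sqrt (f x t)) x t = iterpd [d] f x t * (inverse (sqrt (f x t)) * inverse 2)"
    and "Fq (\<lambda>x t. sqrt (f x t)) differentiable (at (x,t))"
proof -
  let ?F = "frechet_derivative (Fq f) (at (x,t))"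
  have H: "((\<lambda>q. sqrt (Fq f q)) has_derivative (\<lambda>h. ?F h * (inverse (sqrt (Fq f (x,t))) / 2))) (at (x,t))"
    by (rule has_derivative_real_sqrt) (use assms Fq_diff_D[OF assms(1)] in \<open>simp_all add: Fq_def\<close>)
  have E: "Fq (\<lambda>x t. sqrt (f x t)) = (\<lambda>q. sqrt (Fq f q))" by (simp add: Fq_def)
  have D: "(Fq (\<lambda>x t. sqrt (f x t)) has_derivative (\<lambda>h. ?F h * (inverse (sqrt (Fq f (x,t))) / 2))) (at (x,t))"
    using H E by simp
  have "iterpd [d] (\<lambda>x t. sqrt (f x t)) x t = ?F (dv d) * (inverse (sqrt (Fq f (x,t))) / 2)"
    by (rule pd_hd[OF D])
  also have "\<dots> = iterpd [d] f x t * (inverse (sqrt (f x t)) * inverse 2)"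
    using pd_vd[OF assms(1)] by (simp add: Fq_def)
  finally show "iterpd [d] (\<lambda>x t. sqrt (f x t)) x t = iterpd [d] f x t * (inverse (sqrt (f x t)) * inverse 2)" .
  show "Fq (\<lambda>x t. sqrt (f x t)) differentiable (at (x,t))" using D differentiable_def by blast
qed

lemma sm_0': "sm 0 U f \<longleftrightarrow> (\<forall>x t. (x,t) \<in> U \<longrightarrow> Fq f differentiable (at (x,t)))"
  unfolding sm_0 by auto

lemma sm_diffble: "sm n U f \<Longrightarrow> (x,t) \<in> U \<Longrightarrow> Fq f differentiable (at (x,t))"
  unfolding sm_def by (metis iterpd.simps(1) le0 list.size(3))

lemma sm_pd: "sm (Suc n) U f \<Longrightarrow> sm n U (iterpd [d] f)"
  using sm_Suc by blast

lemma cong_pt: "(\<And>x t. (x,t) \<in> U \<Longrightarrow> f x t = g x t) \<Longrightarrow> q \<in> U \<Longrightarrow> Fq f q = Fq g q"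
  by (cases q) (auto simp: Fq_def)

lemma sm_add:
  fixes f g :: "'a::real_normed_vector field"
  assumes "open U"
  shows "sm n U f \<Longrightarrow> sm n U g \<Longrightarrow> sm n U (\<lambda>x t. f x t + g x t)"
proof (induction n arbitrary: f g)
  case 0 then show ?case unfolding sm_0' using pd_add(2) by blast
next
  case (Suc n)
  have "sm 0 U (\<lambda>x t. f x t + g x t)" unfolding sm_0' by (intro allI impI pd_add(2)) (use Suc.prems sm_diffble in blast)+
  moreover have "sm n U (iterpd [d] (\<lambda>x t. f x t + g x t))" for d
  proof (rule sm_cong[OF assms])
    show "sm n U (\<lambda>x t. iterpd [d] f x t + iterpd [d] g x t)"
      using Suc.IH sm_pd Suc.prems by blast
    show "q \<in> U \<Longrightarrow> Fq (\<lambda>x t. iterpd [d] f x t + iterpd [d] g x t) q = Fq (iterpd [d] (\<lambda>x t. f x t + g x t)) q" for q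
      by (rule cong_pt, rule pd_add(1)[symmetric]) (use Suc.prems sm_diffble in \<open>auto simp del: iterpd.simps\<close>)
  qed
  ultimately show ?case using sm_Suc by blast
qed

lemma sm_diff:
  fixes f g :: "'a::real_normed_vector field"
  assumes "open U"
  shows "sm n U f \<Longrightarrow> sm n U g \<Longrightarrow> sm n U (\<lambda>x t. f x t - g x t)"
proof (induction n arbitrary: f g)
  case 0 then show ?case unfolding sm_0' using pd_diff(2) by blast
next
  case (Suc n)
  have "sm 0 U (\<lambda>x t. f x t - g x t)" unfolding sm_0' by (intro allI impI pd_diff(2)) (use Suc.prems sm_diffble in blast)+
  moreover have "sm n U (iterpd [d] (\<lambda>x t. f x t - g x t))" for d
  proof (rule sm_cong[OF assms])
    show "sm n U (\<lambda>x t. iterpd [d] f x t - iterpd [d] g x t)"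
      using Suc.IH sm_pd Suc.prems by blast
    show "q \<in> U \<Longrightarrow> Fq (\<lambda>x t. iterpd [d] f x t - iterpd [d] g x t) q = Fq (iterpd [d] (\<lambda>x t. f x t - g x t)) q" for q
      by (rule cong_pt, rule pd_diff(1)[symmetric]) (use Suc.prems sm_diffble in \<open>auto simp del: iterpd.simps\<close>)
  qed
  ultimately show ?case using sm_Suc by blast
qed

lemma sm_const: "sm n U (\<lambda>x t. c)"
proof (induction n arbitrary: c)
  case 0 then show ?case unfolding sm_0' using pd_const(2) by blast
next
  case (Suc n)
  have E: "iterpd [d] (\<lambda>x t. c) = (\<lambda>x t. 0)" for d using pd_const(1) by (intro ext) blast
  show ?case unfolding sm_Suc E using Suc.IH pd_const(2) unfolding sm_0' by blast
qed

lemma sm_bil: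
  fixes f :: "'a::real_normed_vector field" and g :: "'b::real_normed_vector field"
    and prod :: "'a \<Rightarrow> 'b \<Rightarrow> 'c::real_normed_vector"
  assumes "open U" and bb: "bounded_bilinear prod"
  shows "sm n U f \<Longrightarrow> sm n U g \<Longrightarrow> sm n U (\<lambda>x t. prod (f x t) (g x t))"
proof (induction n arbitrary: f g)
  case 0 then show ?case unfolding sm_0' using pd_bil(2)[OF bb] by blast
next
  case (Suc n)
  have "sm 0 U (\<lambda>x t. prod (f x t) (g x t))" unfolding sm_0' by (intro allI impI pd_bil(2)[OF bb]) (use Suc.prems sm_diffble in blast)+
  moreover have "sm n U (iterpd [d] (\<lambda>x t. prod (f x t) (g x t)))" for d
  proof (rule sm_cong[OF assms(1)])
    have "sm n U (\<lambda>x t. prod (f x t) (iterpd [d] g x t))" using Suc.IH sm_pd sm_mono Suc.prems by blast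
    moreover have "sm n U (\<lambda>x t. prod (iterpd [d] f x t) (g x t))" using Suc.IH sm_pd sm_mono Suc.prems by blast
    ultimately show "sm n U (\<lambda>x t. prod (f x t) (iterpd [d] g x t) + prod (iterpd [d] f x t) (g x t))"
      using sm_add[OF assms(1)] by blast
    show "q \<in> U \<Longrightarrow> Fq (\<lambda>x t. prod (f x t) (iterpd [d] g x t) + prod (iterpd [d] f x t) (g x t)) q = Fq (iterpd [d] (\<lambda>x t. prod (f x t) (g x t))) q" for q
      by (rule cong_pt, rule pd_bil(1)[OF bb, symmetric]) (use Suc.prems sm_diffble in \<open>auto simp del: iterpd.simps\<close>)
  qed
  ultimately show ?case using sm_Suc by blast
qed

lemma sm_mult: "open U \<Longrightarrow> sm n U f \<Longrightarrow> sm n U g \<Longrightarrow> sm n U (\<lambda>x t. (f x t::real) * g x t)"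
  using sm_bil[OF _ bounded_bilinear_mult] by blast

lemma sm_inv:
  fixes f :: "real field"
  assumes "open U" and nz: "\<And>x t. (x,t) \<in> U \<Longrightarrow> f x t \<noteq> 0"
  shows "sm n U f \<Longrightarrow> sm n U (\<lambda>x t. inverse (f x t))"
proof (induction n)
  case 0 then show ?case unfolding sm_0' using pd_inv(2) nz by blast
next
  case (Suc n)
  have "sm 0 U (\<lambda>x t. inverse (f x t))" unfolding sm_0' by (intro allI impI pd_inv(2)) (use Suc.prems sm_diffble nz in blast)+
  moreover have "sm n U (iterpd [d] (\<lambda>x t. inverse (f x t)))" for d
  proof (rule sm_cong[OF assms(1)])
    have I: "sm n U (\<lambda>x t. inverse (f x t))" using Suc.IH sm_mono Suc.prems by blast
    have "sm n U (\<lambda>x t. (-1::real) * (inverse (f x t) * inverse (f x t)))"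
      by (rule sm_mult[OF assms(1) sm_const sm_mult[OF assms(1) I I]])
    then show "sm n U (\<lambda>x t. ((-1::real) * (inverse (f x t) * inverse (f x t))) * iterpd [d] f x t)"
      using sm_mult[OF assms(1)] sm_pd Suc.prems by blast
    show "q \<in> U \<Longrightarrow> Fq (\<lambda>x t. ((-1::real) * (inverse (f x t) * inverse (f x t))) * iterpd [d] f x t) q = Fq (iterpd [d] (\<lambda>x t. inverse (f x t))) q" for q
      by (rule cong_pt, rule pd_inv(1)[symmetric]) (use Suc.prems sm_diffble nz in \<open>auto simp del: iterpd.simps\<close>)
  qed
  ultimately show ?case using sm_Suc by blast
qed

lemma sm_sqrt:
  fixes f :: "real field"
  assumes "open U" and pos: "\<And>x t. (x,t) \<in> U \<Longrightarrow> f x t > 0"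
  shows "sm n U f \<Longrightarrow> sm n U (\<lambda>x t. sqrt (f x t))"
proof (induction n)
  case 0 then show ?case unfolding sm_0' using pd_sqrt(2) pos by blast
next
  case (Suc n)
  have "sm 0 U (\<lambda>x t. sqrt (f x t))" unfolding sm_0' by (intro allI impI pd_sqrt(2)) (use Suc.prems sm_diffble pos in blast)+
  moreover have "sm n U (iterpd [d] (\<lambda>x t. sqrt (f x t)))" for d
  proof (rule sm_cong[OF assms(1)])
    have I: "sm n U (\<lambda>x t. sqrt (f x t))" using Suc.IH sm_mono Suc.prems by blast
    have "sm n U (\<lambda>x t. inverse (sqrt (f x t)))"
      by (rule sm_inv[OF assms(1) _ I]) (use pos in fastforce)
    then have "sm n U (\<lambda>x t. inverse (sqrt (f x t)) * inverse 2)"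
      by (rule sm_mult[OF assms(1) _ sm_const])
    then show "sm n U (\<lambda>x t. iterpd [d] f x t * (inverse (sqrt (f x t)) * inverse 2))"
      using sm_mult[OF assms(1)] sm_pd Suc.prems by blast
    show "q \<in> U \<Longrightarrow> Fq (\<lambda>x t. iterpd [d] f x t * (inverse (sqrt (f x t)) * inverse 2)) q = Fq (iterpd [d] (\<lambda>x t. sqrt (f x t))) q" for q
      by (rule cong_pt, rule pd_sqrt(1)[symmetric]) (use Suc.prems sm_diffble pos in \<open>auto simp del: iterpd.simps\<close>)
  qed
  ultimately show ?case using sm_Suc by blast
qed

lemma sm_sum:
  fixes F :: "'i \<Rightarrow> 'a::real_normed_vector field"
  assumes "open U" "finite I" "\<And>i. i \<in> I \<Longrightarrow> sm n U (F i)"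
  shows "sm n U (\<lambda>x t. \<Sum>i\<in>I. F i x t)"
  using assms(2,3)
proof (induction I rule: finite_induct)
  case empty then show ?case using sm_const by simp
next
  case (insert i I)
  then show ?case using sm_add[OF assms(1), of n "F i" "\<lambda>x t. \<Sum>i\<in>I. F i x t"] by simp
qed



lemma schwarz_aux:
  fixes g :: "'a::real_normed_vector \<Rightarrow> real"
  assumes S: "open S" "p \<in> S"
    and G: "\<And>q. q \<in> S \<Longrightarrow> (g has_derivative G q) (at q)"
    and Du: "((\<lambda>q. G q u) has_derivative Du) (at p)"
  shows "((\<lambda>h. (g (p + h *\<^sub>R u + h *\<^sub>R v) - g (p + h *\<^sub>R u) - g (p + h *\<^sub>R v) + g p) / h^2) \<longlongrightarrow> Du v) (at_right 0)"
proof (rule tendstoI)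
  fix e :: real assume e: "e > 0"
  define K where "K = 2 * norm u + norm v + 1"
  have K: "K > 0" "2 * norm u + norm v \<le> K" unfolding K_def by (auto intro: add_nonneg_pos)
  define \<epsilon> where "\<epsilon> = e / (2 * K)"
  have eps: "\<epsilon> > 0" "\<epsilon> * K < e" using e K unfolding \<epsilon>_def by (auto simp: field_simps)
  have lDu: "bounded_linear Du" using Du has_derivative_bounded_linear by blast
  obtain d where d: "d > 0" "\<And>y. norm (y - p) < d \<Longrightarrow> norm (G y u - G p u - Du (y - p)) \<le> \<epsilon> * norm (y - p)"
    using Du eps(1) unfolding has_derivative_at_alt by blast
  obtain r where r: "r > 0" "ball p r \<subseteq> S" using S openE by blast
  define K' where "K' = norm u + norm v + 1"
  have K': "K' > 0" "norm u + norm v \<le> K'" unfolding K'_def by (auto intro: add_nonneg_pos)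
  define \<delta> where "\<delta> = min d r / K'"
  have \<delta>: "\<delta> > 0" using d r K' unfolding \<delta>_def by auto
  show "eventually (\<lambda>h. dist ((g (p + h *\<^sub>R u + h *\<^sub>R v) - g (p + h *\<^sub>R u) - g (p + h *\<^sub>R v) + g p) / h^2) (Du v) < e) (at_right 0)"
    unfolding eventually_at_right_field
  proof (intro exI[of _ \<delta>] conjI allI impI)
    show "0 < \<delta>" by (rule \<delta>)
    fix h :: real assume h: "0 < h" "h < \<delta>"
    have small: "norm (s *\<^sub>R u + h *\<^sub>R v) < min d r" if "0 \<le> s" "s \<le> h" for s
    proof -
      have "norm (s *\<^sub>R u + h *\<^sub>R v) \<le> s * norm u + h * norm v"
        using norm_triangle_ineq[of "s *\<^sub>R u" "h *\<^sub>R v"] that h by simp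
      also have "\<dots> \<le> h * (norm u + norm v)" using that by (simp add: algebra_simps mult_right_mono)
      also have "\<dots> \<le> h * K'" using K' h by (simp add: mult_left_mono)
      also have "\<dots> < \<delta> * K'" using h K' by simp
      also have "\<dots> = min d r" using K' unfolding \<delta>_def by simp
      finally show ?thesis .
    qed
    have smallu: "norm (s *\<^sub>R u) < min d r" if "0 \<le> s" "s \<le> h" for s
    proof -
      have "norm (s *\<^sub>R u) = s * norm u" using that by simp
      also have "\<dots> \<le> h * norm u" using that by (simp add: mult_right_mono)
      also have "\<dots> \<le> h * K'" by (intro mult_left_mono) (use K' h norm_ge_zero[of v] in linarith)+
      also have "\<dots> < \<delta> * K'" using h K' by simp
      also have "\<dots> = min d r" using K' unfolding \<delta>_def by simp
      finally show ?thesis .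
    qed
    have inS: "p + w \<in> S" if "norm w < min d r" for w
      using that r(2) by (auto simp: dist_norm)
    define \<phi> where "\<phi> s = g (p + s *\<^sub>R u + h *\<^sub>R v) - g (p + s *\<^sub>R u)" for s
    define \<phi>' where "\<phi>' s = (\<lambda>k::real. G (p + s *\<^sub>R u + h *\<^sub>R v) (k *\<^sub>R u) - G (p + s *\<^sub>R u) (k *\<^sub>R u))" for s
    have der: "(\<phi> has_derivative \<phi>' s) (at s within {0..h})" if "0 \<le> s" "s \<le> h" for s
    proof -
      have in1: "p + s *\<^sub>R u + h *\<^sub>R v \<in> S" using inS[OF small[OF that]] by (simp add: add.assoc)
      have in2: "p + s *\<^sub>R u \<in> S" using inS[OF smallu[OF that]] by simp
      have c1: "((\<lambda>s. p + s *\<^sub>R u + h *\<^sub>R v) has_derivative (\<lambda>k. k *\<^sub>R u)) (at s)"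
        by (auto intro!: derivative_eq_intros)
      have c2: "((\<lambda>s. p + s *\<^sub>R u) has_derivative (\<lambda>k. k *\<^sub>R u)) (at s)"
        by (auto intro!: derivative_eq_intros)
      have "((\<lambda>s. g (p + s *\<^sub>R u + h *\<^sub>R v)) has_derivative (\<lambda>k. G (p + s *\<^sub>R u + h *\<^sub>R v) (k *\<^sub>R u))) (at s)"
        by (rule has_derivative_compose[OF c1 G[OF in1]])
      moreover have "((\<lambda>s. g (p + s *\<^sub>R u)) has_derivative (\<lambda>k. G (p + s *\<^sub>R u) (k *\<^sub>R u))) (at s)"
        by (rule has_derivative_compose[OF c2 G[OF in2]])
      ultimately have "(\<phi> has_derivative \<phi>' s) (at s)"
        unfolding \<phi>_def[abs_def] \<phi>'_def by (rule has_derivative_diff)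
      then show ?thesis by (rule has_derivative_at_withinI)
    qed
    obtain \<xi> where \<xi>: "\<xi> \<in> {0<..<h}" "\<phi> h - \<phi> 0 = \<phi>' \<xi> (h - 0)"
      using mvt_simple[OF h(1) der] by blast
    have \<xi>': "0 \<le> \<xi>" "\<xi> \<le> h" using \<xi>(1) by auto
    define a where "a = p + \<xi> *\<^sub>R u + h *\<^sub>R v"
    define b where "b = p + \<xi> *\<^sub>R u"
    have la: "linear (G a)" using G[of a] inS[OF small[OF \<xi>']] has_derivative_linear unfolding a_def by (metis add.assoc)
    have lb: "linear (G b)" using G[of b] inS[OF smallu[OF \<xi>']] has_derivative_linear unfolding b_def by metis
    have \<Delta>: "g (p + h *\<^sub>R u + h *\<^sub>R v) - g (p + h *\<^sub>R u) - g (p + h *\<^sub>R v) + g p = h * (G a u - G b u)"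
    proof -
      have "\<phi>' \<xi> (h - 0) = h * (G a u - G b u)"
        unfolding \<phi>'_def using linear_scale[OF la, of h u] linear_scale[OF lb, of h u]
        by (simp add: a_def b_def algebra_simps)
      then show ?thesis using \<xi>(2) unfolding \<phi>_def by (simp add: algebra_simps)
    qed
    have na: "norm (a - p) < d" using small[OF \<xi>'] unfolding a_def by (simp add: add.assoc)
    have nb: "norm (b - p) < d" using smallu[OF \<xi>'] unfolding b_def by simp
    have ea: "norm (G a u - G p u - Du (a - p)) \<le> \<epsilon> * norm (a - p)" by (rule d(2)[OF na])
    have eb: "norm (G b u - G p u - Du (b - p)) \<le> \<epsilon> * norm (b - p)" by (rule d(2)[OF nb])
    have Dab: "Du (a - p) - Du (b - p) = h * Du v"
    proof -
      have "Du (a - p) - Du (b - p) = Du ((a - p) - (b - p))" using lDu by (simp add: linear_diff bounded_linear.linear)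
      also have "(a - p) - (b - p) = h *\<^sub>R v" unfolding a_def b_def by simp
      finally show ?thesis using lDu by (simp add: linear_scale bounded_linear.linear)
    qed
    have "abs (G a u - G b u - h * Du v) \<le> \<epsilon> * norm (a - p) + \<epsilon> * norm (b - p)"
    proof -
      have "G a u - G b u - h * Du v = (G a u - G p u - Du (a - p)) - (G b u - G p u - Du (b - p))"
        using Dab by simp
      moreover have "\<bar>(G a u - G p u - Du (a - p)) - (G b u - G p u - Du (b - p))\<bar> \<le> \<bar>G a u - G p u - Du (a - p)\<bar> + \<bar>G b u - G p u - Du (b - p)\<bar>"
        by (rule abs_triangle_ineq4)
      ultimately show ?thesis using ea eb unfolding real_norm_def by linarith
    qed
    also have "\<dots> \<le> \<epsilon> * (h * K)"
    proof -
      have "norm (a - p) \<le> h * norm u + h * norm v"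
      proof -
        have "norm (a - p) = norm (\<xi> *\<^sub>R u + h *\<^sub>R v)" unfolding a_def by (simp add: add.assoc)
        also have "\<dots> \<le> \<xi> * norm u + h * norm v" using norm_triangle_ineq[of "\<xi> *\<^sub>R u" "h *\<^sub>R v"] \<xi>' h by simp
        also have "\<dots> \<le> h * norm u + h * norm v" using \<xi>' by (simp add: mult_right_mono)
        finally show ?thesis .
      qed
      moreover have "norm (b - p) \<le> h * norm u" unfolding b_def using \<xi>' by (simp add: mult_right_mono)
      ultimately have "norm (a - p) + norm (b - p) \<le> h * (2 * norm u + norm v)" by (simp add: algebra_simps)
      also have "\<dots> \<le> h * K" using K h by (simp add: mult_left_mono)
      finally show ?thesis using eps by (simp add: distrib_left[symmetric] mult_left_mono)
    qed
    finally have A: "abs (G a u - G b u - h * Du v) \<le> \<epsilon> * (h * K)" .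
    have "dist ((g (p + h *\<^sub>R u + h *\<^sub>R v) - g (p + h *\<^sub>R u) - g (p + h *\<^sub>R v) + g p) / h^2) (Du v)
        = abs (G a u - G b u - h * Du v) / h"
    proof -
      have "(h * (G a u - G b u)) / h^2 - Du v = (G a u - G b u - h * Du v) / h"
        using h by (simp add: power2_eq_square field_simps)
      then show ?thesis unfolding \<Delta> dist_real_def using h by simp
    qed
    also have "\<dots> \<le> \<epsilon> * K" using A h by (simp add: divide_le_eq mult.commute mult.left_commute)
    also have "\<dots> < e" by (rule eps)
    finally show "dist ((g (p + h *\<^sub>R u + h *\<^sub>R v) - g (p + h *\<^sub>R u) - g (p + h *\<^sub>R v) + g p) / h^2) (Du v) < e" .
  qed
qed

lemma schwarz_real:
  fixes g :: "'a::real_normed_vector \<Rightarrow> real"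
  assumes S: "open S" "p \<in> S"
    and G: "\<And>q. q \<in> S \<Longrightarrow> (g has_derivative G q) (at q)"
    and Du: "((\<lambda>q. G q u) has_derivative Du) (at p)"
    and Dv: "((\<lambda>q. G q v) has_derivative Dv) (at p)"
  shows "Du v = Dv u"
proof -
  have L1: "((\<lambda>h. (g (p + h *\<^sub>R u + h *\<^sub>R v) - g (p + h *\<^sub>R u) - g (p + h *\<^sub>R v) + g p) / h^2) \<longlongrightarrow> Du v) (at_right 0)"
    by (rule schwarz_aux[OF S G Du])
  have L2: "((\<lambda>h. (g (p + h *\<^sub>R v + h *\<^sub>R u) - g (p + h *\<^sub>R v) - g (p + h *\<^sub>R u) + g p) / h^2) \<longlongrightarrow> Dv u) (at_right 0)"
    by (rule schwarz_aux[OF S G Dv])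
  have E: "(\<lambda>h. (g (p + h *\<^sub>R v + h *\<^sub>R u) - g (p + h *\<^sub>R v) - g (p + h *\<^sub>R u) + g p) / h^2)
         = (\<lambda>h. (g (p + h *\<^sub>R u + h *\<^sub>R v) - g (p + h *\<^sub>R u) - g (p + h *\<^sub>R v) + g p) / h^2)"
    by (intro ext) (simp add: algebra_simps)
  show ?thesis using tendsto_unique[OF trivial_limit_at_right_real L1] L2 unfolding E by blast
qed

lemma schwarz:
  fixes g :: "'a::real_normed_vector \<Rightarrow> 'b::real_inner"
  assumes S: "open S" "p \<in> S"
    and G: "\<And>q. q \<in> S \<Longrightarrow> (g has_derivative G q) (at q)"
    and Du: "((\<lambda>q. G q u) has_derivative Du) (at p)"
    and Dv: "((\<lambda>q. G q v) has_derivative Dv) (at p)"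
  shows "Du v = Dv u"
proof -
  have "Du v \<bullet> c = Dv u \<bullet> c" for c
  proof (rule schwarz_real[OF S])
    show "((\<lambda>q. g q \<bullet> c) has_derivative (\<lambda>k. G q k \<bullet> c)) (at q)" if "q \<in> S" for q
      using bounded_linear.has_derivative[OF bounded_linear_inner_left G[OF that]] .
    show "((\<lambda>q. G q u \<bullet> c) has_derivative (\<lambda>k. Du k \<bullet> c)) (at p)"
      using bounded_linear.has_derivative[OF bounded_linear_inner_left Du] .
    show "((\<lambda>q. G q v \<bullet> c) has_derivative (\<lambda>k. Dv k \<bullet> c)) (at p)"
      using bounded_linear.has_derivative[OF bounded_linear_inner_left Dv] .
  qed
  then have "(Du v - Dv u) \<bullet> (Du v - Dv u) = 0" by (simp only: inner_diff_left)
  then show ?thesis by simp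
qed

lemma pd_comm:
  fixes f :: "'a::{real_normed_vector,real_inner} field"
  assumes U: "open U" "(x,t) \<in> U" and sm: "sm 2 U f"
  shows "iterpd [d1] (iterpd [d2] f) x t = iterpd [d2] (iterpd [d1] f) x t"
proof -
  define G where "G q = frechet_derivative (Fq f) (at q)" for q
  have dif: "\<And>q. q \<in> U \<Longrightarrow> Fq f differentiable (at q)" using sm sm_diffble by (metis prod.collapse)
  have GD: "\<And>q. q \<in> U \<Longrightarrow> (Fq f has_derivative G q) (at q)" unfolding G_def using dif frechet_derivative_works by blast
  have sm1: "sm 1 U (iterpd [d] f)" for d using sm sm_pd by (metis Suc_1)
  have eq: "Fq (iterpd [d] f) q = G q (dv d)" if "q \<in> U" for q d
    using pd_vd[of f "fst q" "snd q" d] dif[OF that] unfolding G_def by (simp add: Fq_def)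
  have DD: "((\<lambda>q. G q (dv d)) has_derivative frechet_derivative (Fq (iterpd [d] f)) (at (x,t))) (at (x,t))" for d
  proof (rule has_derivative_transform_within_open[OF _ U])
    show "(Fq (iterpd [d] f) has_derivative frechet_derivative (Fq (iterpd [d] f)) (at (x, t))) (at (x, t))"
      using sm_diffble[OF sm1 U(2)] frechet_derivative_works by blast
    show "\<And>q. q \<in> U \<Longrightarrow> Fq (iterpd [d] f) q = G q (dv d)" by (rule eq)
  qed
  have "frechet_derivative (Fq (iterpd [d2] f)) (at (x,t)) (dv d1) = frechet_derivative (Fq (iterpd [d1] f)) (at (x,t)) (dv d2)"
    by (rule schwarz[OF U GD DD DD])
  moreover have "iterpd [d1] (iterpd [d2] f) x t = frechet_derivative (Fq (iterpd [d2] f)) (at (x,t)) (dv d1)"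
    by (rule pd_vd[OF sm_diffble[OF sm1 U(2)]])
  moreover have "iterpd [d2] (iterpd [d1] f) x t = frechet_derivative (Fq (iterpd [d1] f)) (at (x,t)) (dv d2)"
    by (rule pd_vd[OF sm_diffble[OF sm1 U(2)]])
  ultimately show ?thesis by simp
qed



lemma matrix_inv_eq:
  fixes A B :: "real^'n^'n"
  assumes "A ** B = mat 1" "B ** A = mat 1"
  shows "matrix_inv A = B"
proof -
  have ex: "\<exists>A'. A ** A' = mat 1 \<and> A' ** A = mat 1" using assms by blast
  define C where "C = matrix_inv A"
  have C: "A ** C = mat 1 \<and> C ** A = mat 1" unfolding C_def matrix_inv_def using someI_ex[OF ex] .
  have "C = C ** (A ** B)" using assms by simp
  also have "\<dots> = (C ** A) ** B" by (rule matrix_mul_assoc)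
  also have "\<dots> = B" using C by simp
  finally show ?thesis unfolding C_def .
qed

definition inv2 :: "real^2^2 \<Rightarrow> real^2^2" where
  "inv2 A = (\<chi> i j. (if i = 1 then (if j = 1 then A$2$2 else - A$1$2)
                     else (if j = 1 then - A$2$1 else A$1$1)) * inverse (A$1$1 * A$2$2 - A$1$2 * A$2$1))"

lemma matrix_inv2:
  fixes A :: "real^2^2"
  assumes "A$1$1 * A$2$2 - A$1$2 * A$2$1 \<noteq> 0"
  shows "matrix_inv A = inv2 A"
proof (rule matrix_inv_eq)
  have sq: "(A$1$1 * A$2$2 - A$1$2 * A$2$1) * (A$1$1 * A$2$2 - A$1$2 * A$2$1) \<noteq> 0" using assms by simp
  have sq2: "A $ 1 $ 1 * (A $ 1 $ 1 * (A $ 2 $ 2 * A $ 2 $ 2)) + A $ 1 $ 2 * (A $ 1 $ 2 * (A $ 2 $ 1 * A $ 2 $ 1)) \<noteq> 2 * (A $ 1 $ 1 * (A $ 1 $ 2 * (A $ 2 $ 1 * A $ 2 $ 2)))"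
    using sq by (simp add: algebra_simps)
  show "A ** inv2 A = mat 1" using assms sq2
    by (simp add: vec_eq_iff forall_2 matrix_matrix_mult_def sum_2 mat_def inv2_def field_simps)
  show "inv2 A ** A = mat 1" using assms sq2
    by (simp add: vec_eq_iff forall_2 matrix_matrix_mult_def sum_2 mat_def inv2_def field_simps)
qed

definition smo :: "((real^2) \<times> real) set \<Rightarrow> 'a::real_normed_vector field \<Rightarrow> bool" where
  "smo U f \<longleftrightarrow> (\<forall>n. sm n U f)"

lemma smo_smooth: "smooth_field_on U f \<Longrightarrow> smo U f"
  unfolding smo_def smooth_sm by blast

lemma smo_pS: "smo U f \<Longrightarrow> smo U (pS a f)"
  unfolding smo_def using sm_pd[of _ U f "Some a"] by simp

lemma smo_pT: "smo U f \<Longrightarrow> smo U (pT f)"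
  unfolding smo_def using sm_pd[of _ U f None] by simp

lemma smo_cong: "open U \<Longrightarrow> smo U f \<Longrightarrow> (\<And>x t. (x,t) \<in> U \<Longrightarrow> f x t = g x t) \<Longrightarrow> smo U g"
  unfolding smo_def using sm_cong cong_pt by metis

lemma smo_add: "open U \<Longrightarrow> smo U f \<Longrightarrow> smo U g \<Longrightarrow> smo U (\<lambda>x t. f x t + g x t)"
  unfolding smo_def using sm_add by blast
lemma smo_diff: "open U \<Longrightarrow> smo U f \<Longrightarrow> smo U g \<Longrightarrow> smo U (\<lambda>x t. f x t - g x t)"
  unfolding smo_def using sm_diff by blast
lemma smo_mult: "open U \<Longrightarrow> smo U f \<Longrightarrow> smo U g \<Longrightarrow> smo U (\<lambda>x t. (f x t::real) * g x t)"
  unfolding smo_def using sm_mult by blast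
lemma smo_scaleR: "open U \<Longrightarrow> smo U f \<Longrightarrow> smo U g \<Longrightarrow> smo U (\<lambda>x t. f x t *\<^sub>R (g x t::'a::real_normed_vector))"
  unfolding smo_def using sm_bil[OF _ bounded_bilinear_scaleR] by blast
lemma smo_inner: "open U \<Longrightarrow> smo U f \<Longrightarrow> smo U g \<Longrightarrow> smo U (\<lambda>x t. f x t \<bullet> (g x t::'a::real_inner))"
  unfolding smo_def using sm_bil[OF _ bounded_bilinear_inner] by blast
lemma bb_cross: "bounded_bilinear cross3"
  using bilinear_cross bilinear_conv_bounded_bilinear by blast
lemma smo_cross: "open U \<Longrightarrow> smo U f \<Longrightarrow> smo U g \<Longrightarrow> smo U (\<lambda>x t. cross3 (f x t) (g x t))"
  unfolding smo_def using sm_bil[OF _ bb_cross] by blast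
lemma smo_const: "smo U (\<lambda>x t. c)"
  unfolding smo_def using sm_const by blast
lemma smo_sum: "open U \<Longrightarrow> finite I \<Longrightarrow> (\<And>i. i \<in> I \<Longrightarrow> smo U (F i)) \<Longrightarrow> smo U (\<lambda>x t. \<Sum>i\<in>I. F i x t)"
  unfolding smo_def using sm_sum by blast
lemma smo_inv: "open U \<Longrightarrow> (\<And>x t. (x,t) \<in> U \<Longrightarrow> f x t \<noteq> 0) \<Longrightarrow> smo U f \<Longrightarrow> smo U (\<lambda>x t. inverse (f x t::real))"
  unfolding smo_def using sm_inv by blast
lemma smo_sqrt: "open U \<Longrightarrow> (\<And>x t. (x,t) \<in> U \<Longrightarrow> f x t > 0) \<Longrightarrow> smo U f \<Longrightarrow> smo U (\<lambda>x t. sqrt (f x t::real))"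
  unfolding smo_def using sm_sqrt by blast

lemma smo_sumUNIV: "open U \<Longrightarrow> (\<And>i. smo U (F i)) \<Longrightarrow> smo U (\<lambda>x t. \<Sum>i\<in>(UNIV::2 set). F i x t)"
  using smo_sum[of U UNIV F] by simp

lemmas smo_intros = smo_add smo_diff smo_mult smo_scaleR smo_inner smo_cross smo_const smo_sumUNIV smo_pS smo_pT



lemma smo_minus: assumes "open U" "smo U f" shows "smo U (\<lambda>x t. - f x t)"
  by (rule smo_cong[OF assms(1) smo_diff[OF assms(1) smo_const assms(2)]]) simp

context
  fixes U :: "((real^2) \<times> real) set" and R :: "(real^3) field"
  assumes U: "open U" and smR: "smo U R"
    and nz: "\<forall>p\<in>U. cross3 (Sv R 1 (fst p) (snd p)) (Sv R 2 (fst p) (snd p)) \<noteq> 0"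
begin

lemma smo_Sv: "smo U (Sv R a)"
  unfolding Sv_def[abs_def] using smo_pS[OF smR] by simp

lemma smo_metric: "smo U (metric R a b)"
proof -
  have "metric R a b = (\<lambda>x t. Sv R a x t \<bullet> Sv R b x t)" by (intro ext) (simp add: metric_def)
  then show ?thesis using smo_inner[OF U smo_Sv smo_Sv] by simp
qed

definition detg where "detg x t = metric R 1 1 x t * metric R 2 2 x t - metric R 1 2 x t * metric R 2 1 x t"

lemma detg_pos: "(x,t) \<in> U \<Longrightarrow> detg x t > 0"
proof -
  assume xt: "(x,t) \<in> U"
  let ?a = "Sv R 1 x t" and ?b = "Sv R 2 x t"
  have "cross3 ?a ?b \<noteq> 0" using nz xt by force
  then have "(norm (cross3 ?a ?b))\<^sup>2 > 0" by simp
  moreover have "detg x t = (norm (cross3 ?a ?b))\<^sup>2"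
    using norm_cross_dot[of ?a ?b] unfolding detg_def metric_def
      power2_norm_eq_inner[of ?a, symmetric] power2_norm_eq_inner[of ?b, symmetric]
    by (simp add: power2_norm_eq_inner inner_commute power_mult_distrib power2_eq_square algebra_simps)
  ultimately show ?thesis by simp
qed

lemma smo_detg: "smo U detg"
  unfolding detg_def[abs_def] by (intro smo_intros U smo_metric)

lemma invmetric_eq: "(x,t) \<in> U \<Longrightarrow> invmetric R a b x t =
   (if a = 1 then (if b = 1 then metric R 2 2 x t else - metric R 1 2 x t)
    else (if b = 1 then - metric R 2 1 x t else metric R 1 1 x t)) * inverse (detg x t)"
proof -
  assume xt: "(x,t) \<in> U"
  have "detg x t \<noteq> 0" using detg_pos[OF xt] by simp
  then have "matrix_inv (\<chi> i j. metric R i j x t) = inv2 (\<chi> i j. metric R i j x t)"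
    by (intro matrix_inv2) (simp add: detg_def)
  then show ?thesis unfolding invmetric_def by (simp add: inv2_def detg_def)
qed

lemma smo_invmetric: "smo U (invmetric R a b)"
proof (rule smo_cong[OF U _ invmetric_eq[symmetric]])
  have i: "smo U (\<lambda>x t. inverse (detg x t))" by (rule smo_inv[OF U _ smo_detg]) (use detg_pos in fastforce)
  have e: "smo U (\<lambda>x t. (if a = 1 then (if b = 1 then metric R 2 2 x t else - metric R 1 2 x t)
    else (if b = 1 then - metric R 2 1 x t else metric R 1 1 x t)))"
    by (cases "a = 1"; cases "b = 1") (simp_all add: smo_metric smo_minus[OF U smo_metric])
  show "smo U (\<lambda>x t. (if a = 1 then (if b = 1 then metric R 2 2 x t else - metric R 1 2 x t)
    else (if b = 1 then - metric R 2 1 x t else metric R 1 1 x t)) * inverse (detg x t))"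
    by (rule smo_mult[OF U e i])
qed

lemma smo_Sup: "smo U (Sup R a)"
proof -
  have "Sup R a = (\<lambda>x t. \<Sum>\<beta>\<in>UNIV. invmetric R a \<beta> x t *\<^sub>R Sv R \<beta> x t)" by (intro ext) (simp add: Sup_def)
  then show ?thesis by (simp add: smo_intros U smo_invmetric smo_Sv)
qed

lemma smo_normal: "smo U (normal R)"
proof -
  let ?c = "\<lambda>x t. cross3 (Sv R 1 x t) (Sv R 2 x t)"
  have c: "smo U ?c" by (intro smo_intros U smo_Sv)
  have pos: "(x,t) \<in> U \<Longrightarrow> ?c x t \<bullet> ?c x t > 0" for x t using nz by force
  have s: "smo U (\<lambda>x t. sqrt (?c x t \<bullet> ?c x t))"
    using smo_sqrt[OF U pos smo_inner[OF U c c]] by blast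
  have i: "smo U (\<lambda>x t. inverse (sqrt (?c x t \<bullet> ?c x t)))"
    by (rule smo_inv[OF U _ s]) (use pos in fastforce)
  have "smo U (\<lambda>x t. inverse (sqrt (?c x t \<bullet> ?c x t)) *\<^sub>R ?c x t)" by (rule smo_scaleR[OF U i c])
  moreover have "normal R = (\<lambda>x t. inverse (sqrt (?c x t \<bullet> ?c x t)) *\<^sub>R ?c x t)"
    by (intro ext) (simp add: normal_def norm_eq_sqrt_inner divide_inverse)
  ultimately show ?thesis by simp
qed

lemma smo_chr: "smo U (chr R c a b)"
proof -
  have "chr R c a b = (\<lambda>x t. Sup R c x t \<bullet> pS a (Sv R b) x t)" by (intro ext) (simp add: chr_def)
  then show ?thesis by (simp add: smo_intros U smo_Sup smo_Sv)
qed

lemma smo_Blow: "smo U (Blow R a b)"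
proof -
  have "Blow R a b = (\<lambda>x t. normal R x t \<bullet> (pS a (Sv R b) x t - (\<Sum>\<gamma>\<in>UNIV. chr R \<gamma> a b x t *\<^sub>R Sv R \<gamma> x t)))"
    by (intro ext) (simp add: Blow_def)
  then show ?thesis by (simp add: smo_intros U smo_normal smo_chr smo_Sv)
qed

lemma smo_Bmix: "smo U (Bmix R a b)"
proof -
  have "Bmix R a b = (\<lambda>x t. \<Sum>\<gamma>\<in>UNIV. invmetric R a \<gamma> x t * Blow R \<gamma> b x t)"
    by (intro ext) (simp add: Bmix_def)
  then show ?thesis by (simp add: smo_intros U smo_invmetric smo_Blow)
qed

lemma smo_vel: "smo U (vel R)"
  unfolding vel_def by (rule smo_pT[OF smR])

lemma smo_Cn: "smo U (Cn R)"
proof -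
  have "Cn R = (\<lambda>x t. vel R x t \<bullet> normal R x t)" by (intro ext) (simp add: Cn_def)
  then show ?thesis by (simp add: smo_intros U smo_vel smo_normal)
qed

lemma smo_Vt: "smo U (Vt R a)"
proof -
  have "Vt R a = (\<lambda>x t. vel R x t \<bullet> Sup R a x t)" by (intro ext) (simp add: Vt_def)
  then show ?thesis by (simp add: smo_intros U smo_vel smo_Sup)
qed

lemma smo_covV: "(\<And>c. smo U (\<psi> c)) \<Longrightarrow> smo U (covV R \<psi> a b)"
proof -
  assume p: "\<And>c. smo U (\<psi> c)"
  have "covV R \<psi> a b = (\<lambda>x t. pS a (\<psi> b) x t + (\<Sum>\<gamma>\<in>UNIV. chr R b a \<gamma> x t * \<psi> \<gamma> x t))"
    by (intro ext) (simp add: covV_def)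
  then show ?thesis by (simp add: smo_intros U smo_chr p)
qed

lemma smo_Gdot: "smo U (Gdot R a b)"
proof -
  have "Gdot R a b = (\<lambda>x t. covV R (Vt R) b a x t - Cn R x t * Bmix R a b x t)"
    by (intro ext) (simp add: Gdot_def)
  then show ?thesis by (simp add: smo_intros U smo_covV smo_Vt smo_Cn smo_Bmix)
qed

end



lemma smo_diffble: "smo U f \<Longrightarrow> (x,t) \<in> U \<Longrightarrow> Fq f differentiable (at (x,t))"
  unfolding smo_def using sm_diffble by blast

lemma pdA: "smo U f \<Longrightarrow> smo U g \<Longrightarrow> (x,t) \<in> U \<Longrightarrow> iterpd [d] (\<lambda>x t. f x t + g x t) x t = iterpd [d] f x t + iterpd [d] g x t"
  using pd_add(1) smo_diffble by blast
lemma pdD: "smo U f \<Longrightarrow> smo U g \<Longrightarrow> (x,t) \<in> U \<Longrightarrow> iterpd [d] (\<lambda>x t. f x t - g x t) x t = iterpd [d] f x t - iterpd [d] g x t"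
  using pd_diff(1) smo_diffble by blast
lemma pdM: "smo U f \<Longrightarrow> smo U g \<Longrightarrow> (x,t) \<in> U \<Longrightarrow> iterpd [d] (\<lambda>x t. (f x t::real) * g x t) x t = f x t * iterpd [d] g x t + iterpd [d] f x t * g x t"
  using pd_bil(1)[OF bounded_bilinear_mult] smo_diffble by blast
lemma pdS: assumes "open U" "\<And>i. smo U (F i)" "(x,t) \<in> U"
  shows "iterpd [d] (\<lambda>x t. \<Sum>i\<in>(UNIV::2 set). F i x t) x t = (\<Sum>i\<in>UNIV. iterpd [d] (F i) x t)"
proof -
  have "(\<lambda>x t. \<Sum>i\<in>(UNIV::2 set). F i x t) = (\<lambda>x t. F 1 x t + F 2 x t)" by (simp add: sum_2)
  then show ?thesis using pdA[OF assms(2) assms(2) assms(3)] by (simp add: sum_2)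
qed

lemmas pSA = pdA[where d="Some a" for a, simplified]
lemmas pSD = pdD[where d="Some a" for a, simplified]
lemmas pSM = pdM[where d="Some a" for a, simplified]
lemmas pSS = pdS[where d="Some a" for a, simplified]
lemmas pTA = pdA[where d="None", simplified]
lemmas pTD = pdD[where d="None", simplified]
lemmas pTM = pdM[where d="None", simplified]
lemmas pTS = pdS[where d="None", simplified]


theorem mainTheorem1:
  fixes R :: "(real^3) field" and \<psi> :: "2 \<Rightarrow> real field" and U :: "((real^2) \<times> real) set"
  assumes "open U"
    and "smooth_field_on U R"
    and "\<forall>p\<in>U. cross3 (Sv R 1 (fst p) (snd p)) (Sv R 2 (fst p) (snd p)) \<noteq> 0"
    and "\<forall>\<beta>. smooth_field_on U (\<psi> \<beta>)"
    and "(x, t) \<in> U"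
  shows "tdM R (\<lambda>\<beta> \<alpha>. covV R \<psi> \<alpha> \<beta>) \<beta> \<alpha> x t - covV R (tdV R \<psi>) \<alpha> \<beta> x t
       = (\<Sum>\<gamma>\<in>UNIV. Rdot R \<beta> \<alpha> \<gamma> x t * \<psi> \<gamma> x t)
         + Cn R x t * (\<Sum>\<gamma>\<in>UNIV. Bmix R \<gamma> \<alpha> x t * covV R \<psi> \<gamma> \<beta> x t)"
proof -
  have U: "open U" by fact
  have smR: "smo U R" using assms(2) smo_smooth by blast
  note nz = assms(3)
  have sp: "\<And>c. smo U (\<psi> c)" using assms(4) smo_smooth by blast
  have xt: "(x,t) \<in> U" by fact
  have sm2: "\<And>f. smo U f \<Longrightarrow> sm 2 U f" unfolding smo_def by blast
  note smg = smo_chr[OF U smR nz] smo_Vt[OF U smR nz] smo_Gdot[OF U smR nz] smo_covV[OF U smR nz sp] sp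
     smo_pS smo_pT
  note smi = smo_add[OF U] smo_diff[OF U] smo_mult[OF U] smo_sumUNIV[OF U]
  have S1: "\<And>a b. pT (pS a (\<psi> b)) x t = pS a (pT (\<psi> b)) x t"
    using pd_comm[OF U xt sm2[OF sp], of None "Some a" for a] by simp
  have S2: "\<And>a c b. pS a (pS c (\<psi> b)) x t = pS c (pS a (\<psi> b)) x t"
    using pd_comm[OF U xt sm2[OF sp], of "Some a" "Some c" for a c] by simp
  have S3: "\<And>d a c. chr R d a c x t = chr R d c a x t"
    using pd_comm[OF U xt sm2[OF smR], of "Some a" "Some c" for a c] by (simp add: chr_def Sv_def)
  have F1: "\<And>a b. pT (covV R \<psi> a b) x t = pT (pS a (\<psi> b)) x t
      + (\<Sum>c\<in>UNIV. chr R b a c x t * pT (\<psi> c) x t + pT (chr R b a c) x t * \<psi> c x t)"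
  proof -
    fix a b
    have "covV R \<psi> a b = (\<lambda>x t. pS a (\<psi> b) x t + (\<Sum>\<gamma>\<in>UNIV. chr R b a \<gamma> x t * \<psi> \<gamma> x t))"
      by (intro ext) (simp add: covV_def)
    then show "?thesis a b" by (simp add: pTA[of U] pTS[OF U] pTM[of U] smg smi xt)
  qed
  have F3: "\<And>a c b. pS a (covV R \<psi> c b) x t = pS a (pS c (\<psi> b)) x t
      + (\<Sum>d\<in>UNIV. chr R b c d x t * pS a (\<psi> d) x t + pS a (chr R b c d) x t * \<psi> d x t)"
  proof -
    fix a c b
    have "covV R \<psi> c b = (\<lambda>x t. pS c (\<psi> b) x t + (\<Sum>\<gamma>\<in>UNIV. chr R b c \<gamma> x t * \<psi> \<gamma> x t))"
      by (intro ext) (simp add: covV_def)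
    then show "?thesis a c b" by (simp add: pSA[of U] pSS[OF U] pSM[of U] smg smi xt)
  qed
  have F2: "\<And>a b. pS a (tdV R \<psi> b) x t = pS a (pT (\<psi> b)) x t
      - (\<Sum>c\<in>UNIV. Vt R c x t * pS a (covV R \<psi> c b) x t + pS a (Vt R c) x t * covV R \<psi> c b x t)
      + (\<Sum>c\<in>UNIV. Gdot R b c x t * pS a (\<psi> c) x t + pS a (Gdot R b c) x t * \<psi> c x t)"
  proof -
    fix a b
    have "tdV R \<psi> b = (\<lambda>x t. pT (\<psi> b) x t - (\<Sum>\<gamma>\<in>UNIV. Vt R \<gamma> x t * covV R \<psi> \<gamma> b x t)
         + (\<Sum>\<gamma>\<in>UNIV. Gdot R b \<gamma> x t * \<psi> \<gamma> x t))"
      by (intro ext) (simp add: tdV_def)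
    then show "?thesis a b" by (simp add: pSA[of U] pSD[of U] pSS[OF U] pSM[of U] smg smi xt)
  qed
  show ?thesis
    apply (simp add: tdM_def covM_def covV_def tdV_def Rdot_def Riem_def Gdot_def F1 F2 F3 S1 sum_2)
    apply (simp add: S2 S3)
    apply (simp add: algebra_simps)
    done
qed


end
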